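(* Let $Q$ be a simply-laced cluster quiver which does not contain any non-oriented full cycle. Let $S$ and $S'$ be two different sets of arrows of $Q$ such that for every full cycle $C$ of $Q$, the number of arrows of $C$ contained in $S$ and the number of arrows of $C$ contained in $S'$ have the same parity. Then the signed graph $\Sigma(q_{S'})$ can be obtained from $\Sigma(q_S)$ by a sequence of sign changes $r_{i_1},\dots,r_{i_m}$ at vertices such that each vertex is used at most once and not all vertices are used.
   Context: A cluster quiver is a finite quiver without loops and oriented 2-cycles; simply-laced means there is at most one arrow between any two vertices. A cycle is a cycle of length $\ge3$ without repeated vertices in the underlying graph; it is full if the full subquiver on its vertices contains no other arrows, and oriented if its arrows go consistently around it. A signed graph is a graph whose edges are either solid or dotted. For a set $S$ of arrows of $Q$, $\Sigma(q_S)$ is the underlying undirected graph of $Q$ in which edges coming from arrows in $S$ are dotted and all other edges are solid (it is the signed graph of the quadratic form $q_S(x)=\sum_ix_i^2+\sum_{i<j}a_{ij}x_ix_j$ with $a_{ij}=1$ for a dotted edge, $-1$ for a solid edge, $0$ otherwise). For a vertex $i$ of a signed graph $\Sigma$, the sign change $r_i(\Sigma)$ is the signed graph obtained by switching solid/dotted on every edge incident to $i$. *)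

theory Defs
  imports Main
begin

text \<open>A quiver is given by a vertex set V and an arrow set A (pairs (source, target)).
  Representing arrows as a set of pairs means there is at most one arrow from u to v.\<close>

definition cluster_quiver :: "'a set \<Rightarrow> ('a \<times> 'a) set \<Rightarrow> bool" where
  "cluster_quiver V A \<longleftrightarrow> finite V \<and> A \<subseteq> V \<times> V
     \<and> (\<forall>v. (v, v) \<notin> A) \<and> (\<forall>u v. (u, v) \<in> A \<longrightarrow> (v, u) \<notin> A)"

text \<open>Simply-laced: at most one arrow between any two vertices (automatic for a set of
  pairs without oriented 2-cycles, stated explicitly for readability).\<close>
definition simply_laced :: "('a \<times> 'a) set \<Rightarrow> bool" where
  "simply_laced A \<longleftrightarrow> (\<forall>u v. \<not> ((u, v) \<in> A \<and> (v, u) \<in> A))"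

definition adjacent :: "('a \<times> 'a) set \<Rightarrow> 'a \<Rightarrow> 'a \<Rightarrow> bool" where
  "adjacent A u v \<longleftrightarrow> (u, v) \<in> A \<or> (v, u) \<in> A"

definition nxt :: "'a list \<Rightarrow> nat \<Rightarrow> 'a" where
  "nxt c i = c ! (Suc i mod length c)"

definition is_cycle :: "'a set \<Rightarrow> ('a \<times> 'a) set \<Rightarrow> 'a list \<Rightarrow> bool" where
  "is_cycle V A c \<longleftrightarrow> distinct c \<and> length c \<ge> 3 \<and> set c \<subseteq> V
     \<and> (\<forall>i < length c. adjacent A (c ! i) (nxt c i))"

definition cycle_arrows :: "('a \<times> 'a) set \<Rightarrow> 'a list \<Rightarrow> ('a \<times> 'a) set" where
  "cycle_arrows A c = {(u, v) \<in> A. \<exists>i < length c.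
       (u = c ! i \<and> v = nxt c i) \<or> (v = c ! i \<and> u = nxt c i)}"

definition full_cycle :: "'a set \<Rightarrow> ('a \<times> 'a) set \<Rightarrow> 'a list \<Rightarrow> bool" where
  "full_cycle V A c \<longleftrightarrow> is_cycle V A c \<and>
     (\<forall>(u, v) \<in> A. u \<in> set c \<and> v \<in> set c \<longrightarrow> (u, v) \<in> cycle_arrows A c)"

definition oriented_cycle :: "('a \<times> 'a) set \<Rightarrow> 'a list \<Rightarrow> bool" where
  "oriented_cycle A c \<longleftrightarrow> (\<forall>i < length c. (c ! i, nxt c i) \<in> A)
                          \<or> (\<forall>i < length c. (nxt c i, c ! i) \<in> A)"

text \<open>Signed graph as a symmetric function: 1 = dotted edge, -1 = solid edge, 0 = no edge
  (the coefficients a_ij of the quadratic form q_S).\<close>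
type_synonym 'a signed_graph = "'a \<Rightarrow> 'a \<Rightarrow> int"

definition Sigma_q :: "('a \<times> 'a) set \<Rightarrow> ('a \<times> 'a) set \<Rightarrow> 'a signed_graph" where
  "Sigma_q A S = (\<lambda>i j. if adjacent A i j
       then (if (i, j) \<in> S \<or> (j, i) \<in> S then 1 else -1) else 0)"

definition sign_change :: "'a \<Rightarrow> 'a signed_graph \<Rightarrow> 'a signed_graph" where
  "sign_change v \<Sigma> = (\<lambda>i j. if (i = v) \<noteq> (j = v) then - \<Sigma> i j else \<Sigma> i j)"

definition sign_changes :: "'a list \<Rightarrow> 'a signed_graph \<Rightarrow> 'a signed_graph" where
  "sign_changes vs \<Sigma> = fold sign_change vs \<Sigma>"

end

theory Submission
  imports Defs
begin

definition ee :: "('a \<times> 'a) set \<Rightarrow> 'a \<Rightarrow> 'a \<Rightarrow> nat" where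
  "ee T x y = (if (x, y) \<in> T \<or> (y, x) \<in> T then 1 else 0)"

lemma ee_sym: "ee T x y = ee T y x"
  unfolding ee_def by auto

fun cnt :: "('a \<times> 'a) set \<Rightarrow> 'a list \<Rightarrow> nat" where
  "cnt T (x # y # xs) = ee T x y + cnt T (y # xs)"
| "cnt T _ = 0"

fun walk :: "('a \<times> 'a) set \<Rightarrow> 'a list \<Rightarrow> bool" where
  "walk A (x # y # xs) = (adjacent A x y \<and> walk A (y # xs))"
| "walk A _ = True"

lemma cnt_append: "cnt T (xs @ b # ys) = cnt T (xs @ [b]) + cnt T (b # ys)"
  by (induction xs rule: induct_list012) auto

lemma walk_append: "walk A (xs @ b # ys) = (walk A (xs @ [b]) \<and> walk A (b # ys))"
  by (induction xs rule: induct_list012) auto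

lemma cnt_rev: "cnt T (rev p) = cnt T p"
proof (induction p rule: induct_list012)
  case (3 x y zs)
  have "rev (x # y # zs) = rev zs @ y # [x]" by simp
  then have "cnt T (rev (x # y # zs)) = cnt T (rev zs @ [y]) + cnt T [y, x]"
    using cnt_append[of T "rev zs" y "[x]"] by simp
  also have "rev zs @ [y] = rev (y # zs)" by simp
  finally show ?case using 3 by (simp add: ee_sym)
qed auto

lemma adjacent_sym: "adjacent A x y = adjacent A y x"
  unfolding adjacent_def by auto

lemma walk_rev: "walk A (rev p) = walk A p"
proof (induction p rule: induct_list012)
  case (3 x y zs)
  have "rev (x # y # zs) = rev zs @ y # [x]" by simp
  then have "walk A (rev (x # y # zs)) = (walk A (rev zs @ [y]) \<and> walk A [y, x])"
    using walk_append[of A "rev zs" y "[x]"] by simp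
  also have "rev zs @ [y] = rev (y # zs)" by simp
  finally show ?case using 3 by (auto simp add: adjacent_sym)
qed auto

lemma cnt_idx: "cnt T p = (\<Sum>i < length p - 1. ee T (p ! i) (p ! Suc i))"
proof (induction p rule: induct_list012)
  case (3 x y zs)
  show ?case using 3 by (simp add: sum.lessThan_Suc_shift del: sum.lessThan_Suc)
qed auto

lemma walk_idx: "walk A p = (\<forall>i. Suc i < length p \<longrightarrow> adjacent A (p ! i) (p ! Suc i))"
proof (induction p rule: induct_list012)
  case (3 x y zs)
  show ?case using 3 by (auto simp: less_Suc_eq_0_disj)
qed auto

lemma cyc_nth: "i < length c \<Longrightarrow> (c @ [hd c]) ! Suc i = nxt c i"
proof (cases "Suc i < length c")
  case False
  assume "i < length c"
  then have e: "Suc i = length c" using False by simp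
  then have "c \<noteq> []" by auto
  then show ?thesis unfolding nxt_def using e by (simp add: nth_append hd_conv_nth)
qed (auto simp: nxt_def nth_append)

lemma cyc_walk: "c \<noteq> [] \<Longrightarrow> walk A (c @ [hd c]) = (\<forall>i<length c. adjacent A (c ! i) (nxt c i))"
proof -
  assume c: "c \<noteq> []"
  have "(\<forall>i. Suc i < length (c @ [hd c]) \<longrightarrow> adjacent A ((c @ [hd c]) ! i) ((c @ [hd c]) ! Suc i))
     = (\<forall>i<length c. adjacent A (c ! i) (nxt c i))"
  proof (intro iffI allI impI)
    fix i assume h: "\<forall>i. Suc i < length (c @ [hd c]) \<longrightarrow> adjacent A ((c @ [hd c]) ! i) ((c @ [hd c]) ! Suc i)"
      and i: "i < length c"
    then have "adjacent A ((c @ [hd c]) ! i) ((c @ [hd c]) ! Suc i)" using h by simp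
    moreover have "(c @ [hd c]) ! i = c ! i" using i by (simp add: nth_append)
    ultimately show "adjacent A (c ! i) (nxt c i)" using cyc_nth[OF i] by simp
  next
    fix i assume h: "\<forall>i<length c. adjacent A (c ! i) (nxt c i)"
      and i: "Suc i < length (c @ [hd c])"
    then have i': "i < length c" by simp
    have "(c @ [hd c]) ! i = c ! i" using i' by (simp add: nth_append)
    then show "adjacent A ((c @ [hd c]) ! i) ((c @ [hd c]) ! Suc i)"
      using h i' cyc_nth[OF i'] by simp
  qed
  then show ?thesis unfolding walk_idx .
qed

lemma mod_arith:
  assumes "i < n" "j < n" "3 \<le> n" "i = Suc j mod n" "j = Suc i mod n"
  shows False
proof (cases "Suc j < n")
  case True
  then have i: "i = Suc j" using assms(4) by (metis mod_less)
  have j: "j = Suc (Suc j) mod n" using assms(5) unfolding i .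
  show False
  proof (cases "Suc (Suc j) < n")
    case True
    then have "Suc (Suc j) mod n = Suc (Suc j)" by (rule mod_less)
    then show False using j by linarith
  next
    case False
    then have "Suc (Suc j) = n" using \<open>Suc j < n\<close> by linarith
    then have "Suc (Suc j) mod n = 0" by simp
    then have "j = 0" using j by linarith
    then show False using \<open>Suc (Suc j) = n\<close> assms(3) by linarith
  qed
next
  case False
  then have sj: "Suc j = n" using assms(2) by linarith
  then have "i = 0" using assms(4) by (metis mod_self)
  then have "j = Suc 0 mod n" using assms(5) by simp
  also have "Suc 0 mod n = Suc 0" using assms(3) by (intro mod_less) linarith
  finally show False using sj assms(3) by linarith
qed

lemma cycle_cnt:
  assumes cq: "cluster_quiver V A" and T: "T \<subseteq> A" and d: "distinct c" and l: "3 \<le> length c"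
    and adj: "\<forall>i<length c. adjacent A (c ! i) (nxt c i)"
  shows "cnt T (c @ [hd c]) = card (cycle_arrows A c \<inter> T)"
proof -
  define n where "n = length c"
  define g where "g i = (if (c ! i, nxt c i) \<in> A then (c ! i, nxt c i) else (nxt c i, c ! i))" for i
  have no2: "\<And>u v. (u, v) \<in> A \<Longrightarrow> (v, u) \<notin> A" using cq by (auto simp: cluster_quiver_def)
  have gA: "g i \<in> A" if "i < n" for i using adj that by (auto simp: g_def adjacent_def n_def)
  have ee: "ee T (c ! i) (nxt c i) = of_bool (g i \<in> T)" if "i < n" for i
  proof (cases "(c ! i, nxt c i) \<in> A")
    case True
    then have "(nxt c i, c ! i) \<notin> T" using no2 T by blast
    then show ?thesis using True unfolding g_def ee_def by simp
  next
    case False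
    then have "(c ! i, nxt c i) \<notin> T" using T by blast
    then show ?thesis using False unfolding g_def ee_def by simp
  qed
  have "cnt T (c @ [hd c]) = (\<Sum>i<n. ee T ((c @ [hd c]) ! i) ((c @ [hd c]) ! Suc i))"
    by (simp add: cnt_idx n_def)
  also have "\<dots> = (\<Sum>i<n. ee T (c ! i) (nxt c i))"
  proof (rule sum.cong)
    fix i assume "i \<in> {..<n}"
    then have i: "i < length c" by (simp add: n_def)
    then have "(c @ [hd c]) ! i = c ! i" by (simp add: nth_append)
    then show "ee T ((c @ [hd c]) ! i) ((c @ [hd c]) ! Suc i) = ee T (c ! i) (nxt c i)"
      using cyc_nth[OF i] by simp
  qed simp
  also have "\<dots> = (\<Sum>i<n. of_bool (g i \<in> T))"
    using ee by simp
  also have "\<dots> = card ({..<n} \<inter> {i. g i \<in> T})" by simp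
  also have "\<dots> = card (g ` ({..<n} \<inter> {i. g i \<in> T}))"
  proof (rule card_image[symmetric], rule inj_onI)
    fix i j assume i: "i \<in> {..<n} \<inter> {i. g i \<in> T}" and j: "j \<in> {..<n} \<inter> {i. g i \<in> T}"
      and gij: "g i = g j"
    have il: "i < n" and jl: "j < n" using i j by auto
    have "(c ! i = c ! j \<and> nxt c i = nxt c j) \<or> (c ! i = nxt c j \<and> nxt c i = c ! j)"
      using gij by (auto simp: g_def split: if_splits)
    then show "i = j"
    proof
      assume "c ! i = c ! j \<and> nxt c i = nxt c j"
      then show ?thesis using d il jl by (simp add: nth_eq_iff_index_eq n_def)
    next
      assume h: "c ! i = nxt c j \<and> nxt c i = c ! j"
      have n0: "0 < n" using l unfolding n_def by linarith
      have "Suc j mod n < n" "Suc i mod n < n" using n0 by auto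
      note ne = nth_eq_iff_index_eq[OF d]
      have "c ! i = c ! (Suc j mod n)" "c ! (Suc i mod n) = c ! j" using h by (simp_all add: nxt_def n_def)
      moreover have il': "i < length c" "j < length c" "Suc j mod n < length c" "Suc i mod n < length c"
        using il jl \<open>Suc j mod n < n\<close> \<open>Suc i mod n < n\<close> unfolding n_def by auto
      ultimately have e1: "i = Suc j mod n" and e2: "Suc i mod n = j"
        using ne[OF il'(1) il'(3)] ne[OF il'(4) il'(2)] by blast+
      have n3: "3 \<le> n" using l unfolding n_def .
      have False using mod_arith[OF il jl n3 e1 e2[symmetric]] .
      then show ?thesis ..
    qed
  qed
  also have "g ` ({..<n} \<inter> {i. g i \<in> T}) = cycle_arrows A c \<inter> T"
  proof (intro equalityI subsetI)
    fix x assume "x \<in> g ` ({..<n} \<inter> {i. g i \<in> T})"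
    then obtain i where i: "i < n" "g i \<in> T" and x: "x = g i" by auto
    show "x \<in> cycle_arrows A c \<inter> T"
      using i x gA[OF i(1)] unfolding cycle_arrows_def n_def
      by (auto simp: g_def split: if_splits)
  next
    fix x assume x: "x \<in> cycle_arrows A c \<inter> T"
    then obtain u v i where uv: "x = (u, v)" "(u, v) \<in> A" "(u, v) \<in> T" and i: "i < n"
      and o: "(u = c ! i \<and> v = nxt c i) \<or> (v = c ! i \<and> u = nxt c i)"
      unfolding cycle_arrows_def n_def by auto
    have "g i = (u, v)" using o uv no2 by (auto simp: g_def)
    then show "x \<in> g ` ({..<n} \<inter> {i. g i \<in> T})" using i uv by force
  qed
  finally show ?thesis .
qed

lemma chord:
  assumes cq: "cluster_quiver V A" and cyc: "is_cycle V A c" and nf: "\<not> full_cycle V A c"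
  shows "\<exists>xs u ys v zs. c = xs @ u # ys @ v # zs \<and> ys \<noteq> [] \<and> xs @ zs \<noteq> [] \<and> adjacent A u v"
proof -
  define n where "n = length c"
  define P where "P a b = (\<exists>k<n. (a = c ! k \<and> b = nxt c k) \<or> (b = c ! k \<and> a = nxt c k))" for a b
  have Psym: "P a b = P b a" for a b unfolding P_def by blast
  obtain u v where uv: "(u, v) \<in> A" "u \<in> set c" "v \<in> set c" "(u, v) \<notin> cycle_arrows A c"
    using cyc nf unfolding full_cycle_def by auto
  have nP: "\<not> P u v" using uv(1,4) unfolding P_def cycle_arrows_def n_def by auto
  have "u \<noteq> v" using uv(1) cq unfolding cluster_quiver_def by auto
  obtain i j where ij: "i < n" "j < n" "u = c ! i" "v = c ! j"
    using uv(2,3) unfolding n_def in_set_conv_nth by metis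
  have auv: "adjacent A u v" using uv(1) unfolding adjacent_def by simp
  have "i \<noteq> j" using ij \<open>u \<noteq> v\<close> by auto
  then have "\<exists>i j. i < j \<and> j < n \<and> adjacent A (c ! i) (c ! j) \<and> \<not> P (c ! i) (c ! j)"
  proof (cases "i < j")
    case True
    then show ?thesis using ij auv nP by blast
  next
    case False
    then have "j < i" using \<open>i \<noteq> j\<close> by simp
    then show ?thesis using ij auv nP Psym adjacent_sym by metis
  qed
  then obtain a b where ab: "a < b" "b < n" "adjacent A (c ! a) (c ! b)" "\<not> P (c ! a) (c ! b)"
    by blast
  have n0: "0 < n" using ab by simp
  have b1: "b \<noteq> Suc a"
  proof
    assume e: "b = Suc a"
    have "nxt c a = c ! b" unfolding nxt_def n_def[symmetric] using e ab by simp
    then have "P (c ! a) (c ! b)" unfolding P_def using ab by (intro exI[of _ a]) simp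
    then show False using ab by simp
  qed
  have b2: "\<not> (a = 0 \<and> b = n - 1)"
  proof
    assume e: "a = 0 \<and> b = n - 1"
    then have "Suc b = n" using n0 by simp
    then have "nxt c b = c ! a" unfolding nxt_def n_def[symmetric] using e by simp
    then have "P (c ! a) (c ! b)" unfolding P_def using ab by (intro exI[of _ b]) simp
    then show False using ab by simp
  qed
  define xs where "xs = take a c"
  define ys where "ys = take (b - a - 1) (drop (Suc a) c)"
  define zs where "zs = drop (Suc b) c"
  have c1: "c = take a c @ c ! a # drop (Suc a) c"
    using ab unfolding n_def by (simp add: id_take_nth_drop)
  have "drop (Suc a) c = take (b - a - 1) (drop (Suc a) c) @ drop (b - a - 1) (drop (Suc a) c)"
    by (rule append_take_drop_id[symmetric])
  also have "drop (b - a - 1) (drop (Suc a) c) = drop b c"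
    using ab by simp
  also have "drop b c = c ! b # drop (Suc b) c"
    using ab unfolding n_def by (simp add: Cons_nth_drop_Suc)
  finally have "c = xs @ c ! a # ys @ c ! b # zs"
    using c1 unfolding xs_def ys_def zs_def by simp
  moreover have "ys \<noteq> []" unfolding ys_def using ab b1 unfolding n_def by auto
  moreover have "xs @ zs \<noteq> []" unfolding xs_def zs_def using ab b2 unfolding n_def by auto
  ultimately show ?thesis using ab(3) by blast
qed

lemma walk_snoc: "walk A p \<Longrightarrow> p \<noteq> [] \<Longrightarrow> adjacent A (last p) x \<Longrightarrow> walk A (p @ [x])"
  by (induction p rule: induct_list012) auto

locale qs =
  fixes V :: "'a set" and A S S' :: "('a \<times> 'a) set"
  assumes cq: "cluster_quiver V A" and SA: "S \<subseteq> A" and S'A: "S' \<subseteq> A"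
    and par: "\<And>c. full_cycle V A c \<Longrightarrow>
           even (card (cycle_arrows A c \<inter> S)) = even (card (cycle_arrows A c \<inter> S'))"
begin

definition tot where "tot p = cnt S p + cnt S' p"

lemma tot_append: "tot (xs @ b # ys) = tot (xs @ [b]) + tot (b # ys)"
  unfolding tot_def using cnt_append[of S xs b ys] cnt_append[of S' xs b ys] by linarith

lemma tot_rev: "tot (rev p) = tot p"
  unfolding tot_def by (simp add: cnt_rev)

lemma tot_sym: "tot [u, v] = tot [v, u]"
  unfolding tot_def by (simp add: ee_sym)

lemma tot_snoc: "p \<noteq> [] \<Longrightarrow> tot (p @ [x]) = tot p + tot [last p, x]"
proof -
  assume "p \<noteq> []"
  then obtain q y where p: "p = q @ [y]" using rev_exhaust by blast
  show ?thesis unfolding p using tot_append[of q y "[x]"] by simp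
qed

lemma closed_even: "walk A p \<Longrightarrow> p \<noteq> [] \<Longrightarrow> hd p = last p \<Longrightarrow> even (tot p)"
proof (induction "length p" arbitrary: p rule: less_induct)
  case less
  obtain c a where p: "p = c @ [a]" using less.prems(2) rev_exhaust by blast
  show ?case
  proof (cases "c = []")
    case True
    then show ?thesis using p by (simp add: tot_def)
  next
    case cne: False
    have hc: "hd c = a" using less.prems(3) p cne by simp
    show ?thesis
    proof (cases "distinct c")
      case False
      then obtain xs b ys zs where c: "c = xs @ b # ys @ b # zs"
        using not_distinct_decomp[OF False] by fastforce
      define w1 where "w1 = b # ys @ [b]"
      define w2 where "w2 = xs @ b # zs @ [a]"
      have pe: "p = xs @ b # (ys @ b # zs @ [a])" using p c by simp
      have pe2: "b # ys @ b # zs @ [a] = (b # ys) @ b # (zs @ [a])" by simp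
      have wp0: "walk A (xs @ [b])" "walk A (b # ys @ b # zs @ [a])"
        using less.prems(1) walk_append[of A xs b "ys @ b # zs @ [a]"] unfolding pe by simp_all
      have wp: "walk A (b # ys @ [b])" "walk A (b # zs @ [a])"
        using wp0(2) walk_append[of A "b # ys" b "zs @ [a]"] unfolding pe2 by simp_all
      have tp: "tot p = tot (xs @ [b]) + tot (b # ys @ [b]) + tot (b # zs @ [a])"
        using tot_append[of xs b "ys @ b # zs @ [a]"] tot_append[of "b # ys" b "zs @ [a]"]
        unfolding pe pe2 by simp
      have t2: "tot w2 = tot (xs @ [b]) + tot (b # zs @ [a])" unfolding w2_def by (rule tot_append)
      have ww2: "walk A w2" unfolding w2_def using walk_append[of A xs b "zs @ [a]"] wp0(1) wp(2) by simp
      have l1: "length w1 < length p" "length w2 < length p" unfolding w1_def w2_def p c by simp_all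
      have h2: "hd w2 = last w2"
        unfolding w2_def using hc c by (cases xs) auto
      have e1: "even (tot w1)" using less.hyps[OF l1(1)] wp(1) unfolding w1_def by simp
      have e2: "even (tot w2)" using less.hyps[OF l1(2) ww2] h2 unfolding w2_def by simp
      show ?thesis using tp t2 e1 e2 unfolding w1_def by simp
    next
      case dc: True
      have "length c \<noteq> 0" using cne by simp
      then consider "length c = 1" | "length c = 2" | "3 \<le> length c" by linarith
      then show ?thesis
      proof cases
        case 1
        then obtain x where "c = [x]" by (cases c) auto
        then have "p = [a, a]" using p hc by simp
        then have "(a, a) \<in> A" using less.prems(1) by (simp add: adjacent_def)
        then show ?thesis using cq unfolding cluster_quiver_def by auto
      next
        case 2
        then obtain x y where "c = [x, y]" by (cases c; cases "tl c") auto
        then have "p = [a, y, a]" using p hc by simp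
        then show ?thesis by (simp add: tot_def ee_sym)
      next
        case 3
        have pc: "p = c @ [hd c]" using p hc by simp
        have cw: "\<forall>i<length c. adjacent A (c ! i) (nxt c i)"
          using cyc_walk[OF cne, of A] less.prems(1) pc by simp
        have sc: "set c \<subseteq> V"
        proof
          fix x assume "x \<in> set c"
          then obtain i where i: "i < length c" "x = c ! i" by (metis in_set_conv_nth)
          then have "adjacent A x (nxt c i)" using cw by simp
          then show "x \<in> V" using cq unfolding cluster_quiver_def adjacent_def by auto
        qed
        have cyc: "is_cycle V A c" unfolding is_cycle_def using dc 3 sc cw by simp
        show ?thesis
        proof (cases "full_cycle V A c")
          case True
          have "tot p = card (cycle_arrows A c \<inter> S) + card (cycle_arrows A c \<inter> S')"
            unfolding tot_def pc using cycle_cnt[OF cq SA dc 3 cw] cycle_cnt[OF cq S'A dc 3 cw] by simp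
          then show ?thesis using par[OF True] by simp
        next
          case False
          obtain xs u ys v zs where d: "c = xs @ u # ys @ v # zs" "ys \<noteq> []" "xs @ zs \<noteq> []"
            "adjacent A u v" using chord[OF cq cyc False] by blast
          define w1 where "w1 = u # ys @ [v, u]"
          define w2 where "w2 = v # zs @ xs @ [u, v]"
          have pe: "p = xs @ u # (ys @ v # zs @ [a])" using p d by simp
          have pe2: "u # ys @ v # zs @ [a] = (u # ys) @ v # (zs @ [a])" by simp
          have wp0: "walk A (xs @ [u])" "walk A (u # ys @ v # zs @ [a])"
            using less.prems(1) walk_append[of A xs u "ys @ v # zs @ [a]"] unfolding pe by simp_all
          have wp: "walk A (u # ys @ [v])" "walk A (v # zs @ [a])"
            using wp0(2) walk_append[of A "u # ys" v "zs @ [a]"] unfolding pe2 by simp_all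
          have tp: "tot p = tot (xs @ [u]) + tot (u # ys @ [v]) + tot (v # zs @ [a])"
            using tot_append[of xs u "ys @ v # zs @ [a]"] tot_append[of "u # ys" v "zs @ [a]"]
            unfolding pe pe2 by simp
          have A1: "tot (v # zs @ xs @ [u]) = tot (v # zs @ [a]) + tot (xs @ [u])
              \<and> walk A (v # zs @ xs @ [u])"
          proof (cases xs)
            case Nil
            then have "a = u" using hc d by simp
            then show ?thesis using Nil wp by (simp add: tot_def)
          next
            case (Cons x xs')
            then have "a = x" using hc d by simp
            have e: "v # zs @ xs @ [u] = (v # zs) @ x # (xs' @ [u])" using Cons by simp
            show ?thesis unfolding e
              using tot_append[of "v # zs" x "xs' @ [u]"] walk_append[of A "v # zs" x "xs' @ [u]"]
                wp(2) wp0(1) Cons \<open>a = x\<close> by simp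
          qed
          have t1: "tot w1 = tot (u # ys @ [v]) + tot [v, u]"
            unfolding w1_def using tot_append[of "u # ys" v "[u]"] by simp
          have t2: "tot w2 = tot (v # zs @ xs @ [u]) + tot [u, v]"
            unfolding w2_def using tot_append[of "v # zs @ xs" u "[v]"] by simp
          have ww1: "walk A w1"
            unfolding w1_def using walk_append[of A "u # ys" v "[u]"] wp(1) d(4) adjacent_sym[of A u v] by simp
          have ww2: "walk A w2"
            unfolding w2_def using walk_append[of A "v # zs @ xs" u "[v]"] A1 d(4) by simp
          have l: "length w1 < length p" "length w2 < length p"
            unfolding w1_def w2_def p d(1) using d(2,3) by auto
          have e1: "even (tot w1)" using less.hyps[OF l(1) ww1] unfolding w1_def by simp
          have e2: "even (tot w2)" using less.hyps[OF l(2) ww2] unfolding w2_def by simp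
          have "tot w1 + tot w2 = tot p + 2 * tot [u, v]"
            using t1 t2 A1 tp tot_sym[of u v] by simp
          then show ?thesis using e1 e2 by (metis even_add even_mult_iff even_numeral)
        qed
      qed
    qed
  qed
qed

lemma path_par:
  assumes wp: "walk A p" and wq: "walk A q" and "p \<noteq> []" "q \<noteq> []"
    and h: "hd p = hd q" and l: "last p = last q"
  shows "even (tot p + tot q)"
proof -
  obtain p' x where p: "p = p' @ [x]" using \<open>p \<noteq> []\<close> rev_exhaust by blast
  have rq: "rev q = x # tl (rev q)" using \<open>q \<noteq> []\<close> l p
    by (metis Nil_is_rev_conv hd_Cons_tl hd_rev last_snoc)
  define w where "w = p' @ x # tl (rev q)"
  have wr: "walk A (rev q)" using wq walk_rev by blast
  have wx: "walk A (x # tl (rev q))" using wr rq by metis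
  have ww: "walk A w" unfolding w_def using walk_append[of A p' x "tl (rev q)"] wp wx p by simp
  have tx: "tot (x # tl (rev q)) = tot q" using tot_rev[of q] rq by metis
  have tw: "tot w = tot p + tot q"
    unfolding w_def p using tot_append[of p' x "tl (rev q)"] tx by linarith
  have "last w = hd q"
  proof -
    have "last w = last (x # tl (rev q))" unfolding w_def by simp
    also have "\<dots> = last (rev q)" using rq by metis
    also have "\<dots> = hd q" using \<open>q \<noteq> []\<close> by (simp add: last_rev)
    finally show ?thesis .
  qed
  moreover have "hd w = hd p" unfolding w_def p by (cases p') auto
  ultimately have "even (tot w)" using closed_even[OF ww] h unfolding w_def by simp
  then show ?thesis using tw by simp
qed

definition conn where "conn u v = (\<exists>p. walk A p \<and> p \<noteq> [] \<and> hd p = u \<and> last p = v)"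
definition rt where "rt v = (SOME u. conn u v)"
definition XX where "XX = {v \<in> V. \<exists>p. walk A p \<and> p \<noteq> [] \<and> hd p = rt v \<and> last p = v \<and> odd (tot p)}"

lemma conn_step: "conn u i \<Longrightarrow> adjacent A i j \<Longrightarrow> conn u j"
  unfolding conn_def using walk_snoc by fastforce

lemma adj_V: "adjacent A i j \<Longrightarrow> i \<in> V \<and> j \<in> V"
  using cq unfolding cluster_quiver_def adjacent_def by auto

lemma XX_cut:
  assumes a: "adjacent A i j"
  shows "((i \<in> XX) \<noteq> (j \<in> XX)) = odd (tot [i, j])"
proof -
  have a': "adjacent A j i" using a adjacent_sym by metis
  have ceq: "conn u i = conn u j" for u using conn_step a a' by blast
  have rteq: "rt i = rt j" unfolding rt_def using ceq by simp
  have "conn i i" unfolding conn_def by (rule exI[of _ "[i]"]) simp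
  then have "conn (rt i) i" unfolding rt_def by (rule someI)
  then obtain p0 where p0: "walk A p0" "p0 \<noteq> []" "hd p0 = rt i" "last p0 = i"
    unfolding conn_def by blast
  define p1 where "p1 = p0 @ [j]"
  have p1: "walk A p1" "p1 \<noteq> []" "hd p1 = rt j" "last p1 = j"
    unfolding p1_def using walk_snoc[OF p0(1,2)] p0 a rteq by auto
  have tp1: "tot p1 = tot p0 + tot [i, j]" unfolding p1_def using tot_snoc[OF p0(2)] p0(4) by simp
  have V: "i \<in> V" "j \<in> V" using adj_V a by auto
  have mem: "(v \<in> XX) = odd (tot q)" if q: "walk A q" "q \<noteq> []" "hd q = rt v" "last q = v" "v \<in> V" for v q
  proof
    assume "v \<in> XX"
    then obtain r where r: "walk A r" "r \<noteq> []" "hd r = rt v" "last r = v" "odd (tot r)"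
      unfolding XX_def by blast
    then show "odd (tot q)" using path_par[OF r(1) q(1) r(2) q(2)] q r by simp
  next
    assume "odd (tot q)"
    then show "v \<in> XX" unfolding XX_def using q by blast
  qed
  have "(i \<in> XX) = odd (tot p0)" using mem[OF p0 V(1)] .
  moreover have "(j \<in> XX) = odd (tot p1)" using mem[OF p1 V(2)] .
  ultimately show ?thesis using tp1 by auto
qed

lemma XX_sub: "XX \<subseteq> V" unfolding XX_def by auto

end


lemma sign_changes_eq:
  "distinct vs \<Longrightarrow> sign_changes vs \<Sigma> i j = (if (i \<in> set vs) \<noteq> (j \<in> set vs) then - \<Sigma> i j else \<Sigma> i j)"
proof (induction vs arbitrary: \<Sigma>)
  case Nil
  then show ?case by (simp add: sign_changes_def)
next
  case (Cons v vs)
  have "sign_changes (v # vs) \<Sigma> = sign_changes vs (sign_change v \<Sigma>)"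
    by (simp add: sign_changes_def)
  then show ?case using Cons.IH[of "sign_change v \<Sigma>"] Cons.prems
    by (auto simp: sign_change_def)
qed

theorem lemma6p2:
  fixes V :: "'a set" and A S S' :: "('a \<times> 'a) set"
  assumes "cluster_quiver V A"
    and "simply_laced A"
    and "\<And>c. full_cycle V A c \<Longrightarrow> oriented_cycle A c"
    and "S \<subseteq> A" and "S' \<subseteq> A" and "S \<noteq> S'"
    and "\<And>c. full_cycle V A c \<Longrightarrow>
           even (card (cycle_arrows A c \<inter> S)) = even (card (cycle_arrows A c \<inter> S'))"
  shows "\<exists>vs. distinct vs \<and> set vs \<subseteq> V \<and> set vs \<noteq> V
           \<and> sign_changes vs (Sigma_q A S) = Sigma_q A S'"
proof -
  interpret qs V A S S' using assms(1,4,5,7) by unfold_locales auto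
  have fin: "finite V" using assms(1) unfolding cluster_quiver_def by simp
  have no2: "\<And>u v. (u, v) \<in> A \<Longrightarrow> (v, u) \<notin> A" using assms(1) by (auto simp: cluster_quiver_def)
  obtain vs where vs: "set vs = XX" "distinct vs"
    using finite_distinct_list[of XX] finite_subset[OF XX_sub fin] by blast
  have tt: "tot [i, j] = ee S i j + ee S' i j" for i j by (simp add: tot_def)
  obtain x where x: "(x \<in> S) \<noteq> (x \<in> S')" using assms(6) by blast
  then have xA: "x \<in> A" using assms(4,5) by blast
  obtain a b where xab: "x = (a, b)" by (cases x)
  have ab: "(a, b) \<in> A" "((a, b) \<in> S) \<noteq> ((a, b) \<in> S')" using x xA xab by auto
  have "(b, a) \<notin> S" "(b, a) \<notin> S'" using no2[OF ab(1)] assms(4,5) by blast+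
  then have "odd (tot [a, b])" using ab(2) unfolding tt ee_def by auto
  moreover have adjab: "adjacent A a b" using ab(1) unfolding adjacent_def by simp
  ultimately have "(a \<in> XX) \<noteq> (b \<in> XX)" using XX_cut by blast
  moreover have "a \<in> V" "b \<in> V" using adj_V[OF adjab] by auto
  ultimately have neq: "XX \<noteq> V" by blast
  have eq: "sign_changes vs (Sigma_q A S) = Sigma_q A S'"
  proof (intro ext)
    fix i j
    show "sign_changes vs (Sigma_q A S) i j = Sigma_q A S' i j"
    proof (cases "adjacent A i j")
      case True
      have c: "((i \<in> XX) \<noteq> (j \<in> XX)) = odd (ee S i j + ee S' i j)"
        using XX_cut[OF True] unfolding tt .
      show ?thesis unfolding sign_changes_eq[OF vs(2)] vs(1) using c True
        unfolding Sigma_q_def ee_def by auto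
    next
      case False
      then show ?thesis unfolding sign_changes_eq[OF vs(2)] Sigma_q_def by simp
    qed
  qed
  show ?thesis using vs XX_sub neq eq by blast
qed

end
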